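(* Let $\Phi\in\mathcal{C}^2(\mathbb{R}^d)$, let $x_0,x_1\in\mathbb{R}^d$ and $R:=\max\{|x_0|,|x_1|\}>0$. Let $C:=\sup_{|x|\le 9R}|D^2\Phi(x)|$ and $C_{\rho}:=\max_{|x|\le\rho}|\nabla\Phi(x)|$. Let $t_1>0$ satisfy \[Ct_1^2e^{Ct_1^2}\le\tfrac14,\qquad t_1\le\frac{\sqrt R}{\sqrt{2C_{2R}}},\qquad t_1\le\frac{2\sqrt R}{\sqrt{C_{9R}}}\] (a bound with zero denominator being void). Then for every $0<t\le t_1$ there exists $v_0\in\mathbb{R}^d$ with $|v_0|\le4R$ such that $X_t(x_0,v_0/t)=x_1$.
   Context: $(X_t(x,v),V_t(x,v))$ denotes the solution at time $t$ of the ODE system $\dot x=v$, $\dot v=-\nabla\Phi(x)$ with initial data $(x,v)$; $D^2\Phi$ is the Hessian of $\Phi$ and $|\cdot|$ its operator norm. *)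

theory Defs
  imports "HOL-Analysis.Analysis"
begin

definition C2_with :: "('a::euclidean_space \<Rightarrow> real) \<Rightarrow> ('a \<Rightarrow> 'a) \<Rightarrow> ('a \<Rightarrow> 'a \<Rightarrow>\<^sub>L 'a) \<Rightarrow> bool" where
  "C2_with Phi grad hess \<longleftrightarrow>
     (\<forall>x. (Phi has_derivative (\<lambda>h. grad x \<bullet> h)) (at x)) \<and>
     (\<forall>x. (grad has_derivative blinfun_apply (hess x)) (at x)) \<and>
     continuous_on UNIV hess"

definition newton_solution :: "('a::euclidean_space \<Rightarrow> 'a) \<Rightarrow> real \<Rightarrow> 'a \<Rightarrow> 'a \<Rightarrow> (real \<Rightarrow> 'a) \<Rightarrow> (real \<Rightarrow> 'a) \<Rightarrow> bool" where
  "newton_solution grad t x v X V \<longleftrightarrow>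
     X 0 = x \<and> V 0 = v \<and>
     (\<forall>s\<in>{0..t}. (X has_vector_derivative V s) (at s within {0..t}) \<and>
                  (V has_vector_derivative - grad (X s)) (at s within {0..t}))"

end

theory Submission imports Defs begin

lemma int_poly:
  fixes s B :: real assumes "s \<ge> 0"
  shows "integral {0..s} (\<lambda>r. (s - r) * B) = B * s^2/2"
proof -
  have "((\<lambda>r. (s - r) * B) has_integral ((\<lambda>r. B*(s*r - r^2/2)) s - (\<lambda>r. B*(s*r - r^2/2)) 0)) {0..s}"
    apply (rule fundamental_theorem_of_calculus[OF assms])
    apply (auto intro!: derivative_eq_intros simp: has_real_derivative_iff_has_vector_derivative[symmetric])
    done
  then show ?thesis by (simp add: integral_unique power2_eq_square algebra_simps)
qed

lemma bound_I:
  fixes f :: "real \<Rightarrow> 'a::euclidean_space"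
  assumes "s \<ge> 0" "continuous_on {0..s} f" "\<And>r. r \<in> {0..s} \<Longrightarrow> norm (f r) \<le> B"
  shows "norm (integral {0..s} (\<lambda>r. (s - r) *\<^sub>R f r)) \<le> B * s^2/2"
proof -
  have "norm (integral {0..s} (\<lambda>r. (s - r) *\<^sub>R f r)) \<le> integral {0..s} (\<lambda>r. (s - r) * B)"
  proof (rule integral_norm_bound_integral)
    show "(\<lambda>r. (s - r) *\<^sub>R f r) integrable_on {0..s}"
      by (intro integrable_continuous_real continuous_intros assms)
    show "(\<lambda>r. (s - r) * B) integrable_on {0..s}"
      by (intro integrable_continuous_real continuous_intros)
    fix r assume r: "r \<in> {0..s}"
    then show "norm ((s - r) *\<^sub>R f r) \<le> (s - r) * B"
      using assms(3)[OF r] by (auto intro!: mult_left_mono)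
  qed
  then show ?thesis using int_poly[OF assms(1), of B] by linarith
qed

theorem mainTheorem8:
  fixes Phi :: "'a::euclidean_space \<Rightarrow> real" and grad :: "'a \<Rightarrow> 'a"
    and hess :: "'a \<Rightarrow> 'a \<Rightarrow>\<^sub>L 'a" and x0 x1 :: 'a and R C t1 :: real
    and Crho :: "real \<Rightarrow> real"
  assumes "C2_with Phi grad hess"
    and "R = max (norm x0) (norm x1)" and "R > 0"
    and "C = (SUP x\<in>cball 0 (9*R). norm (hess x))"
    and "\<And>\<rho>. Crho \<rho> = (SUP x\<in>cball 0 \<rho>. norm (grad x))"
    and "t1 > 0"
    and "C * t1^2 * exp (C * t1^2) \<le> 1/4"
    and "Crho (2*R) \<noteq> 0 \<Longrightarrow> t1 \<le> sqrt R / sqrt (2 * Crho (2*R))"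
    and "Crho (9*R) \<noteq> 0 \<Longrightarrow> t1 \<le> 2 * sqrt R / sqrt (Crho (9*R))"
  shows "\<forall>t. 0 < t \<and> t \<le> t1 \<longrightarrow>
           (\<exists>v0 X V. norm v0 \<le> 4*R \<and> newton_solution grad t x0 (v0 /\<^sub>R t) X V \<and> X t = x1)"
proof (intro allI impI, elim conjE)
  fix t :: real assume t0: "0 < t" and tt1: "t \<le> t1"
  note C2 = assms(1)[unfolded C2_with_def]
  define K where "K = cball (0::'a) (9*R)"
  define M where "M = Crho (9*R)"
  have Kc: "convex K" "closed K" "K \<noteq> {}" "compact K" using assms(3) by (auto simp: K_def)
  have gder: "\<And>x. (grad has_derivative blinfun_apply (hess x)) (at x)" using C2 by blast
  have gcont: "continuous_on UNIV grad"
    using gder by (meson continuous_at_imp_continuous_on has_derivative_continuous)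
  have hcont: "continuous_on UNIV hess" using C2 by blast
  have bddh: "bdd_above ((\<lambda>x. norm (hess x)) ` K)"
    by (intro bounded_imp_bdd_above compact_imp_bounded compact_continuous_image Kc
        continuous_on_norm continuous_on_subset[OF hcont]) auto
  have bddg: "bdd_above ((\<lambda>x. norm (grad x)) ` K)"
    by (intro bounded_imp_bdd_above compact_imp_bounded compact_continuous_image Kc
        continuous_on_norm continuous_on_subset[OF gcont]) auto
  have hC: "\<And>x. x \<in> K \<Longrightarrow> norm (hess x) \<le> C"
    unfolding assms(4) K_def[symmetric] by (rule cSUP_upper[OF _ bddh])
  have gM: "\<And>x. x \<in> K \<Longrightarrow> norm (grad x) \<le> M"
    unfolding M_def assms(5) K_def[symmetric] by (rule cSUP_upper[OF _ bddg])
  have zK: "0 \<in> K" using assms(3) by (simp add: K_def)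
  have C0: "C \<ge> 0" using hC[OF zK] norm_ge_zero order_trans by blast
  have M0: "M \<ge> 0" using gM[OF zK] norm_ge_zero order_trans by blast
  have glip: "\<And>x y. x \<in> K \<Longrightarrow> y \<in> K \<Longrightarrow> norm (grad x - grad y) \<le> C * norm (x - y)"
    by (rule differentiable_bound[OF Kc(1), where f'="\<lambda>x. blinfun_apply (hess x)"])
       (auto intro: has_derivative_at_withinI[OF gder] simp: norm_blinfun.rep_eq[symmetric] hC)
  have Ct: "C * t^2 \<le> 1/4"
  proof -
    have "C * t1^2 \<le> C * t1^2 * exp (C * t1^2)"
      using C0 by (intro mult_le_cancel_left1[THEN iffD2]) auto
    moreover have "C * t^2 \<le> C * t1^2"
      using C0 t0 tt1 by (intro mult_left_mono power_mono) auto
    ultimately show ?thesis using assms(7) by linarith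
  qed
  have Mt: "M * t^2 \<le> 4 * R"
  proof (cases "M = 0")
    case True then show ?thesis using assms(3) by simp
  next
    case False
    then have Mp: "M > 0" using M0 by simp
    have "t \<le> 2 * sqrt R / sqrt M" using assms(9) False tt1 unfolding M_def by force
    then have "t^2 \<le> (2 * sqrt R / sqrt M)^2" using t0 by (intro power_mono) auto
    also have "\<dots> = 4 * R / M" using Mp assms(3) by (simp add: power_divide power_mult_distrib)
    finally show ?thesis using Mp by (simp add: field_simps)
  qed
  define P where "P = closest_point K"
  define psi where "psi = (\<lambda>y. grad (P y))"
  have PK: "\<And>y. P y \<in> K" unfolding P_def using Kc closest_point_in_set by blast
  have Pid: "\<And>y. y \<in> K \<Longrightarrow> P y = y" unfolding P_def by (rule closest_point_self)
  have psiM: "\<And>y. norm (psi y) \<le> M" unfolding psi_def using gM PK by blast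
  have psilip: "\<And>x y. norm (psi x - psi y) \<le> C * norm (x - y)"
  proof -
    fix x y
    have "norm (psi x - psi y) \<le> C * norm (P x - P y)" unfolding psi_def using glip PK by blast
    also have "\<dots> \<le> C * norm (x - y)"
      using closest_point_lipschitz[OF Kc(1-3), of x y] C0
      by (intro mult_left_mono) (auto simp: dist_norm P_def)
    finally show "norm (psi x - psi y) \<le> C * norm (x - y)" .
  qed
  have psicont: "continuous_on UNIV psi" unfolding psi_def
    using continuous_on_compose2[OF gcont continuous_on_closest_point[OF Kc(1-3)], of UNIV]
    by (simp add: P_def)
  have psiX: "\<And>S (X::real \<Rightarrow>\<^sub>C 'a). continuous_on S (\<lambda>r. psi (X r))"
    by (rule continuous_on_compose2[OF psicont]) auto
  define A where "A = (\<lambda>(X::real \<Rightarrow>\<^sub>C 'a) s. integral {0..s} (\<lambda>r. psi (X r)))"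
  define B where "B = (\<lambda>(X::real \<Rightarrow>\<^sub>C 'a) s. integral {0..s} (\<lambda>r. r *\<^sub>R psi (X r)))"
  define I where "I = (\<lambda>(X::real \<Rightarrow>\<^sub>C 'a) s. integral {0..s} (\<lambda>r. (s - r) *\<^sub>R psi (X r)))"
  define w where "w = (\<lambda>X. (1/t) *\<^sub>R (x1 - x0 + I X t))"
  define F where "F = (\<lambda>X s. x0 + s *\<^sub>R w X - I X s)"
  define cl where "cl = (\<lambda>s::real. max 0 (min t s))"
  have cl: "\<And>s. cl s \<in> {0..t}" "\<And>s. s \<in> {0..t} \<Longrightarrow> cl s = s" "continuous_on UNIV cl"
    using t0 by (auto simp: cl_def intro!: continuous_intros)
  have IAB: "\<And>X s. I X s = s *\<^sub>R A X s - B X s"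
  proof -
    fix X :: "real \<Rightarrow>\<^sub>C 'a" and s :: real
    have i1: "(\<lambda>r. psi (X r)) integrable_on {0..s}" "(\<lambda>r. r *\<^sub>R psi (X r)) integrable_on {0..s}"
      by (intro integrable_continuous_real continuous_on_scaleR continuous_on_id psiX)+
    have "I X s = integral {0..s} (\<lambda>r. s *\<^sub>R psi (X r) - r *\<^sub>R psi (X r))"
      unfolding I_def by (simp add: scaleR_diff_left)
    also have "\<dots> = s *\<^sub>R A X s - B X s"
      using i1 unfolding A_def B_def
      by (subst integral_diff) (auto intro: integrable_cmul)
    finally show "I X s = s *\<^sub>R A X s - B X s" .
  qed
  have Ider: "\<And>X s. s \<in> {0..t} \<Longrightarrow> ((I X) has_vector_derivative A X s) (at s within {0..t})"
  proof -
    fix X :: "real \<Rightarrow>\<^sub>C 'a" and s :: real assume s: "s \<in> {0..t}"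
    have dA: "(A X has_vector_derivative psi (X s)) (at s within {0..t})"
      unfolding A_def by (rule integral_has_vector_derivative[OF psiX s])
    have dB: "(B X has_vector_derivative s *\<^sub>R psi (X s)) (at s within {0..t})"
      unfolding B_def by (rule integral_has_vector_derivative[OF _ s]) (auto intro!: continuous_intros psiX)
    have "((\<lambda>s. s *\<^sub>R A X s - B X s) has_vector_derivative
          (s *\<^sub>R psi (X s) + 1 *\<^sub>R A X s) - s *\<^sub>R psi (X s)) (at s within {0..t})"
      by (intro derivative_intros dA dB)
    then show "((I X) has_vector_derivative A X s) (at s within {0..t})"
      apply simp
    proof -
      have "I X = (\<lambda>s. s *\<^sub>R A X s - B X s)" using IAB by (rule ext)
      then show ?thesis using \<open>((\<lambda>s. s *\<^sub>R A X s - B X s) has_vector_derivative _) _\<close> by simp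
    qed
  qed
  have Fder: "\<And>X s. s \<in> {0..t} \<Longrightarrow> ((F X) has_vector_derivative w X - A X s) (at s within {0..t})"
  proof -
    fix X :: "real \<Rightarrow>\<^sub>C 'a" and s :: real assume s: "s \<in> {0..t}"
    have "((\<lambda>s. x0 + s *\<^sub>R w X - I X s) has_vector_derivative 0 + 1 *\<^sub>R w X - A X s) (at s within {0..t})"
    proof (intro derivative_intros Ider[OF s])
      show "((\<lambda>x. x *\<^sub>R w X) has_vector_derivative 1 *\<^sub>R w X) (at s within {0..t})"
        using has_vector_derivative_scaleR[OF DERIV_ident has_vector_derivative_const[of "w X"], where x=s and s="{0..t}"]
        by simp
    qed
    then show "((F X) has_vector_derivative w X - A X s) (at s within {0..t})"
      by (simp add: F_def)
  qed
  have Fcont: "\<And>X. continuous_on {0..t} (F X)"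
    using Fder has_vector_derivative_continuous continuous_on_eq_continuous_within by blast
  have Ibd: "\<And>X s. s \<in> {0..t} \<Longrightarrow> norm (I X s) \<le> M * s^2/2"
    unfolding I_def by (rule bound_I) (auto intro: psiX psiM)
  have Fbd: "\<And>X s. s \<in> {0..t} \<Longrightarrow> norm (F X s) \<le> 9 * R"
  proof -
    fix X :: "real \<Rightarrow>\<^sub>C 'a" and s :: real assume s: "s \<in> {0..t}"
    have st: "0 \<le> s/t" "s/t \<le> 1" using s t0 by auto
    have eq: "F X s = ((1 - s/t) *\<^sub>R x0 + (s/t) *\<^sub>R x1) + (s/t) *\<^sub>R I X t - I X s"
      using t0 by (simp add: F_def w_def algebra_simps)
    have n1: "norm ((1 - s/t) *\<^sub>R x0 + (s/t) *\<^sub>R x1) \<le> R"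
    proof -
      have "norm ((1 - s/t) *\<^sub>R x0 + (s/t) *\<^sub>R x1) \<le> (1 - s/t) * norm x0 + (s/t) * norm x1"
        using st by (metis (no_types) abs_of_nonneg diff_ge_0_iff_ge norm_scaleR norm_triangle_le
            add_mono order_refl)
      also have "\<dots> \<le> (1 - s/t) * R + (s/t) * R"
        using st assms(2) by (intro add_mono mult_left_mono) auto
      finally show ?thesis by (simp add: algebra_simps)
    qed
    have n2: "norm ((s/t) *\<^sub>R I X t) \<le> M * t^2/2"
    proof -
      have "norm ((s/t) *\<^sub>R I X t) = (s/t) * norm (I X t)" using st s t0 by simp
      also have "\<dots> \<le> 1 * (M * t^2/2)"
        using st Ibd[of t X] t0 norm_ge_zero by (intro mult_mono) auto
      finally show ?thesis by simp
    qed
    have n3: "norm (I X s) \<le> M * t^2/2"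
      using Ibd[OF s, of X] s M0 by (smt (verit) atLeastAtMost_iff mult_left_mono power_mono divide_right_mono)
    have "norm (F X s) \<le> R + M*t^2/2 + M*t^2/2" unfolding eq
      using n1 n2 n3 by (smt (verit) norm_triangle_ineq norm_triangle_ineq4)
    then show "norm (F X s) \<le> 9 * R" using Mt assms(3) by linarith
  qed
  define T where "T = (\<lambda>X. Bcontfun (\<lambda>s. F X (cl s)))"
  have Tmem: "\<And>X. (\<lambda>s. F X (cl s)) \<in> bcontfun"
  proof -
    fix X :: "real \<Rightarrow>\<^sub>C 'a"
    show "(\<lambda>s. F X (cl s)) \<in> bcontfun"
      by (rule bcontfun_normI[where b="9*R"])
         (auto intro!: continuous_on_compose2[OF Fcont[of X] cl(3)] Fbd cl(1))
  qed
  have Tapp: "\<And>X s. apply_bcontfun (T X) s = F X (cl s)"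
    unfolding T_def using Tmem by (simp add: Bcontfun_inverse)
  have Idiff: "\<And>X Y s. s \<in> {0..t} \<Longrightarrow> norm (I X s - I Y s) \<le> (C * dist X Y) * s^2/2"
  proof -
    fix X Y :: "real \<Rightarrow>\<^sub>C 'a" and s :: real assume s: "s \<in> {0..t}"
    have "I X s - I Y s = integral {0..s} (\<lambda>r. (s - r) *\<^sub>R (psi (X r) - psi (Y r)))"
      unfolding I_def
      by (subst integral_diff[symmetric])
         (auto intro!: integrable_continuous_real continuous_intros psiX simp: scaleR_diff_right)
    also have "norm \<dots> \<le> (C * dist X Y) * s^2/2"
    proof (rule bound_I)
      show "0 \<le> s" using s by simp
      show "continuous_on {0..s} (\<lambda>r. psi (X r) - psi (Y r))" by (intro continuous_intros psiX)
      fix r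
      have "norm (psi (X r) - psi (Y r)) \<le> C * norm (X r - Y r)" by (rule psilip)
      also have "\<dots> \<le> C * dist X Y" using C0 dist_bounded[of X r Y]
        by (intro mult_left_mono) (auto simp: dist_norm)
      finally show "norm (psi (X r) - psi (Y r)) \<le> C * dist X Y" .
    qed
    finally show "norm (I X s - I Y s) \<le> (C * dist X Y) * s^2/2" .
  qed
  have contr: "\<And>X Y. dist (T X) (T Y) \<le> (1/4) * dist X Y"
  proof -
    fix X Y :: "real \<Rightarrow>\<^sub>C 'a"
    show "dist (T X) (T Y) \<le> (1/4) * dist X Y"
    proof (rule dist_bound)
      fix s0
      define s where "s = cl s0"
      have s: "s \<in> {0..t}" using cl(1) s_def by blast
      let ?d = "C * dist X Y"
      have d0: "?d \<ge> 0" using C0 by simp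
      have "F X s - F Y s = (s/t) *\<^sub>R (I X t - I Y t) - (I X s - I Y s)"
        by (simp add: F_def w_def algebra_simps)
      then have "norm (F X s - F Y s) \<le> (s/t) * norm (I X t - I Y t) + norm (I X s - I Y s)"
        using s t0 by (smt (verit) norm_scaleR norm_triangle_ineq4 abs_of_nonneg divide_nonneg_pos atLeastAtMost_iff)
      also have "\<dots> \<le> 1 * (?d * t^2/2) + ?d * t^2/2"
      proof (intro add_mono mult_mono)
        show "s/t \<le> 1" using s t0 by auto
        show "norm (I X t - I Y t) \<le> ?d * t^2/2" using Idiff[of t X Y] t0 by simp
        show "norm (I X s - I Y s) \<le> ?d * t^2/2"
          using Idiff[OF s, of X Y] s d0
          by (smt (verit) atLeastAtMost_iff mult_left_mono power_mono divide_right_mono)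
      qed (auto)
      also have "\<dots> = (C * t^2) * dist X Y" by (simp add: algebra_simps)
      also have "\<dots> \<le> (1/4) * dist X Y" using Ct by (intro mult_right_mono) auto
      finally show "dist (apply_bcontfun (T X) s0) (apply_bcontfun (T Y) s0) \<le> (1/4) * dist X Y"
        by (simp add: Tapp s_def dist_norm)
    qed
  qed
  obtain X where fixX: "T X = X"
    using banach_fix_type[of "1/4" T] contr by auto
  have XF: "\<And>s. s \<in> {0..t} \<Longrightarrow> apply_bcontfun X s = F X s"
    using Tapp cl(2) fixX by metis
  have psig: "\<And>s. s \<in> {0..t} \<Longrightarrow> psi (X s) = grad (F X s)"
    using XF Fbd Pid unfolding psi_def K_def by auto
  define V where "V = (\<lambda>s. w X - A X s)"
  define v0 where "v0 = t *\<^sub>R w X"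
  have v0eq: "v0 = x1 - x0 + I X t" using t0 by (simp add: v0_def w_def)
  show "\<exists>v0 X V. norm v0 \<le> 4*R \<and> newton_solution grad t x0 (v0 /\<^sub>R t) X V \<and> X t = x1"
  proof (intro exI conjI)
    show "norm v0 \<le> 4 * R"
    proof -
      have "norm (x1 - x0) \<le> 2 * R" using assms(2) norm_triangle_ineq4[of x1 x0] by linarith
      moreover have "norm (I X t) \<le> M * t^2/2" using Ibd[of t X] t0 by simp
      ultimately show ?thesis using Mt v0eq norm_triangle_ineq[of "x1 - x0" "I X t"] by simp
    qed
    show "F X t = x1" using t0 by (simp add: F_def w_def)
    show "newton_solution grad t x0 (v0 /\<^sub>R t) (F X) V"
      unfolding newton_solution_def
    proof (intro conjI ballI)
      show "F X 0 = x0" by (simp add: F_def I_def)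
      show "V 0 = v0 /\<^sub>R t" using t0 by (simp add: V_def A_def v0_def)
      fix s assume s: "s \<in> {0..t}"
      show "(F X has_vector_derivative V s) (at s within {0..t})"
        unfolding V_def by (rule Fder[OF s])
      have "(A X has_vector_derivative psi (X s)) (at s within {0..t})"
        unfolding A_def by (rule integral_has_vector_derivative[OF psiX s])
      then have "(V has_vector_derivative 0 - psi (X s)) (at s within {0..t})"
        unfolding V_def by (intro derivative_intros)
      then show "(V has_vector_derivative - grad (F X s)) (at s within {0..t})"
        using psig[OF s] by simp
    qed
  qed
qed

end
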